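(* Let $g:\mathbb{R}\to\mathbb{R}$ be a univariate ReLU network whose weights and biases are rational numbers, let $x,\epsilon\in\mathbb{Q}$ with $\epsilon\ge 0$, and let $m$ be the number of weights and biases of $g$ and $d$ the maximal bit length of any of them (and of $x,\epsilon$). Then $\min_{t\in[x-\epsilon,x+\epsilon]}g(t)$ is attained and is a rational number whose bit length is $O(m\cdot d)$, i.e., bounded linearly in the encoding size of $g$.
   Context: A univariate ReLU network $g:\mathbb{R}\to\mathbb{R}$ is a composition of layers $h\mapsto\mathrm{ReLU}(W_k h+b_k)$, $k=1,\dots,\kappa$, with rational weight matrices $W_k$ and bias vectors $b_k$ encoded in binary, input and output dimension 1, and $\mathrm{ReLU}(t)=\max(0,t)$ applied coordinatewise. The bit length of a rational $p/q$ (in lowest terms) is the number of bits needed to write $p$ and $q$ in binary. *)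

theory Defs
  imports Complex_Main
begin

fun nat_bits :: "nat \<Rightarrow> nat" where
  "nat_bits n = (if n < 2 then 1 else nat_bits (n div 2) + 1)"

definition int_bits :: "int \<Rightarrow> nat" where
  "int_bits z = nat_bits (nat \<bar>z\<bar>)"

definition rat_bits :: "rat \<Rightarrow> nat" where
  "rat_bits r = (case quotient_of r of (p, q) \<Rightarrow> int_bits p + int_bits q)"

text \<open>A layer is a pair (W, b): W is a list of rows (each row a list of rationals),
  b the bias vector.  A network is a list of layers.\<close>
type_synonym layer = "rat list list \<times> rat list"
type_synonym relu_net = "layer list"

definition wf_net :: "relu_net \<Rightarrow> bool" where
  "wf_net L \<longleftrightarrow> L \<noteq> [] \<and>
     (\<exists>dims. length dims = length L + 1 \<and> dims ! 0 = 1 \<and> dims ! length L = 1 \<and>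
        (\<forall>k\<le>length L. dims ! k > 0) \<and>
        (\<forall>k<length L. length (fst (L ! k)) = dims ! (k + 1) \<and>
                       length (snd (L ! k)) = dims ! (k + 1) \<and>
                       (\<forall>row\<in>set (fst (L ! k)). length row = dims ! k)))"

definition layer_eval :: "layer \<Rightarrow> real list \<Rightarrow> real list" where
  "layer_eval Wb h =
     map (\<lambda>(row, bi). max 0 ((\<Sum>(w, v)\<leftarrow>zip (map real_of_rat row) h. w * v) + real_of_rat bi))
         (zip (fst Wb) (snd Wb))"

definition net_eval :: "relu_net \<Rightarrow> real \<Rightarrow> real" where
  "net_eval L t = hd (fold layer_eval L [t])"

definition net_params :: "relu_net \<Rightarrow> rat list" where
  "net_params L = concat (map (\<lambda>(W, b). concat W @ b) L)"

definition num_params :: "relu_net \<Rightarrow> nat" where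
  "num_params L = length (net_params L)"

end

theory Submission
  imports Defs
begin


declare nat_bits.simps[simp del]

lemma nat_bits_less: "n < 2 ^ nat_bits n"
proof (induction n rule: nat_bits.induct)
  case (1 n)
  show ?case
  proof (cases "n < 2")
    case True then show ?thesis by (simp add: nat_bits.simps)
  next
    case False
    then have "nat_bits n = nat_bits (n div 2) + 1" by (simp add: nat_bits.simps)
    moreover have "n div 2 < 2 ^ nat_bits (n div 2)" using 1 False by simp
    ultimately show ?thesis by simp
  qed
qed

lemma nat_bits_le: "n < 2 ^ k \<Longrightarrow> 0 < k \<Longrightarrow> nat_bits n \<le> k"
proof (induction n arbitrary: k rule: nat_bits.induct)
  case (1 n)
  show ?case
  proof (cases "n < 2")
    case True then show ?thesis using 1 by (simp add: nat_bits.simps)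
  next
    case False
    have "(2::nat) ^ 1 < 2 ^ k" using 1(2) False by simp
    then have k2: "k \<ge> 2" by (simp only: power_strict_increasing_iff)
    have "(2::nat) ^ k = 2 ^ (k - 1) * 2" using k2
      by (metis Suc_diff_1 less_le_trans mult.commute pos2 power_Suc)
    then have "n div 2 < 2 ^ (k - 1)" using 1(2)
      by (simp add: div_less_iff_less_mult)
    then have "nat_bits (n div 2) \<le> k - 1" using 1 False k2 by simp
    then show ?thesis using False k2 by (simp add: nat_bits.simps)
  qed
qed

lemma int_bits_less: "\<bar>z\<bar> < 2 ^ int_bits z"
proof -
  have "int (nat \<bar>z\<bar>) < int (2 ^ nat_bits (nat \<bar>z\<bar>))"
    using nat_bits_less by (simp only: of_nat_less_iff)
  then show ?thesis unfolding int_bits_def by simp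
qed

lemma int_bits_le: "\<bar>z\<bar> < 2 ^ k \<Longrightarrow> 0 < k \<Longrightarrow> int_bits z \<le> k"
proof -
  assume a: "\<bar>z\<bar> < 2 ^ k" "0 < k"
  have "int (nat \<bar>z\<bar>) < int (2 ^ k)" using a by simp
  then have "nat \<bar>z\<bar> < 2 ^ k" by (simp only: of_nat_less_iff)
  then show ?thesis unfolding int_bits_def using a(2) by (rule nat_bits_le)
qed

lemma rat_bits_parts:
  assumes "quotient_of r = (p, q)"
  shows "\<bar>p\<bar> < 2 ^ rat_bits r" "q < 2 ^ rat_bits r" "0 < q"
proof -
  have "rat_bits r = int_bits p + int_bits q" using assms by (simp add: rat_bits_def)
  moreover have "(2::int) ^ int_bits p \<le> 2 ^ (int_bits p + int_bits q)"
    by (rule power_increasing) auto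
  moreover have "(2::int) ^ int_bits q \<le> 2 ^ (int_bits p + int_bits q)"
    by (rule power_increasing) auto
  moreover have "q > 0" using quotient_of_denom_pos[OF assms] .
  ultimately show "\<bar>p\<bar> < 2 ^ rat_bits r" "q < 2 ^ rat_bits r" "0 < q"
    using int_bits_less[of p] int_bits_less[of q] by (auto intro: less_le_trans)
qed

lemma rat_bits_frac:
  assumes Q: "0 < Q" and P1: "\<bar>P\<bar> < 2 ^ k1" and Q1: "Q < 2 ^ k2" and "0 < k1" "0 < k2"
  shows "rat_bits (rat_of_int P / rat_of_int Q) \<le> k1 + k2"
proof -
  obtain p q where pq: "quotient_of (rat_of_int P / rat_of_int Q) = (p, q)" by (cases "quotient_of (rat_of_int P / rat_of_int Q)")
  have q0: "q > 0" using quotient_of_denom_pos[OF pq] .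
  have cop: "coprime p q" using quotient_of_coprime[OF pq] .
  have "rat_of_int P / rat_of_int Q = rat_of_int p / rat_of_int q" using quotient_of_div[OF pq] .
  then have eq: "P * q = p * Q" using Q q0
    by (simp add: frac_eq_eq) (metis of_int_eq_iff of_int_mult)
  then have "q dvd p * Q" by (metis dvd_triv_right)
  then have "q dvd Q" using cop by (metis coprime_commute coprime_dvd_mult_right_iff)
  then obtain k where k: "Q = q * k" by blast
  have k0: "k > 0" using k Q q0 by (simp add: zero_less_mult_iff)
  have "P = p * k" using eq k q0 by (metis mult.assoc mult.commute mult_cancel_left less_irrefl)
  then have "\<bar>p\<bar> \<le> \<bar>P\<bar>" using k0 by (simp add: abs_mult mult_le_cancel_left1)
  then have "int_bits p \<le> k1" using P1 assms by (intro int_bits_le) auto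
  moreover have "q \<le> Q" using k k0 q0 by simp
  then have "int_bits q \<le> k2" using Q1 q0 assms by (intro int_bits_le) auto
  ultimately show ?thesis using pq by (simp add: rat_bits_def)
qed



definition den :: "rat \<Rightarrow> int" where "den r = snd (quotient_of r)"
definition pden :: "rat list \<Rightarrow> int" where "pden xs = prod_list (map den xs)"
definition QN :: "int \<Rightarrow> real set" where
  "QN N = {real_of_int p / real_of_int q | p q. \<bar>p\<bar> \<le> N \<and> 0 < q \<and> q \<le> N}"
definition aff_ok :: "int \<Rightarrow> real \<Rightarrow> real \<times> real \<Rightarrow> bool" where
  "aff_ok E M ac \<longleftrightarrow> real_of_int E * fst ac \<in> \<int> \<and> real_of_int E * snd ac \<in> \<int> \<and>
     \<bar>fst ac\<bar> \<le> M \<and> \<bar>snd ac\<bar> \<le> M"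
definition aff :: "real \<Rightarrow> real \<times> real \<Rightarrow> real" where
  "aff t ac = fst ac * t + snd ac"

lemma den_pos: "den r > 0"
  unfolding den_def by (rule quotient_of_denom_pos')

lemma pden_pos: "pden xs > 0"
  unfolding pden_def by (induction xs) (auto simp: den_pos)

lemma pden_append: "pden (xs @ ys) = pden xs * pden ys"
  unfolding pden_def by simp

lemma den_Ints: "real_of_int (den r) * real_of_rat r \<in> \<int>"
proof -
  obtain p q where pq: "quotient_of r = (p, q)" by (cases "quotient_of r")
  have "r = of_int p / of_int q" using quotient_of_div[OF pq] .
  moreover have "q > 0" using quotient_of_denom_pos[OF pq] .
  ultimately have "real_of_int q * real_of_rat r = real_of_int p"
    by (simp add: of_rat_divide)
  then show ?thesis using pq by (simp add: den_def)
qed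

lemma pden_Ints: "x \<in> set xs \<Longrightarrow> real_of_int (pden xs) * real_of_rat x \<in> \<int>"
proof -
  assume "x \<in> set xs"
  then have "den x dvd pden xs" unfolding pden_def by (intro prod_list_dvd) auto
  then obtain k where k: "pden xs = den x * k" by blast
  have "real_of_int (pden xs) * real_of_rat x = real_of_int k * (real_of_int (den x) * real_of_rat x)"
    using k by simp
  then show ?thesis using den_Ints[of x] by (metis Ints_mult Ints_of_int)
qed

lemma rat_abs_bound: "\<bar>real_of_rat r\<bar> \<le> 2 ^ rat_bits r"
proof -
  obtain p q where pq: "quotient_of r = (p, q)" by (cases "quotient_of r")
  have r: "r = of_int p / of_int q" using quotient_of_div[OF pq] .
  have q: "q \<ge> 1" using quotient_of_denom_pos[OF pq] by simp
  have p: "\<bar>p\<bar> < 2 ^ rat_bits r" using rat_bits_parts(1)[OF pq] .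
  have "\<bar>real_of_rat r\<bar> = \<bar>real_of_int p\<bar> / real_of_int q" using r q by (simp add: of_rat_divide)
  also have "\<dots> \<le> \<bar>real_of_int p\<bar>" using q by (simp add: divide_le_eq) (metis abs_ge_zero mult_le_cancel_left1 of_int_1_le_iff order.strict_iff_not)
  also have "\<dots> \<le> 2 ^ rat_bits r" using p
    by (metis less_imp_le of_int_abs of_int_le_iff of_int_numeral of_int_power)
  finally show ?thesis .
qed

lemma den_bound: "den r < 2 ^ rat_bits r"
  unfolding den_def using rat_bits_parts(2)[of r "fst (quotient_of r)" "snd (quotient_of r)"] by simp

lemma pden_bound: "(\<forall>r\<in>set xs. rat_bits r \<le> d) \<Longrightarrow> pden xs \<le> 2 ^ (d * length xs)"
proof (induction xs)
  case Nil then show ?case by (simp add: pden_def)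
next
  case (Cons x xs)
  have "(2::int) ^ rat_bits x \<le> 2 ^ d"
    using Cons.prems by (intro power_increasing) auto
  then have "den x \<le> 2 ^ d"
    using den_bound[of x] by linarith
  moreover have "pden xs \<le> 2 ^ (d * length xs)" using Cons by simp
  moreover have "pden (x # xs) = den x * pden xs" by (simp add: pden_def)
  ultimately have "pden (x # xs) \<le> 2 ^ d * 2 ^ (d * length xs)"
    using den_pos[of x] pden_pos[of xs] by (metis mult_mono less_imp_le zero_le_power zero_le_numeral)
  then show ?case by (simp add: power_add)
qed

lemma sum_zip_aff:
  "(\<Sum>(w, v)\<leftarrow>zip (map g ws) (map (aff t) cs). w * v) =
   (\<Sum>(w, ac)\<leftarrow>zip ws cs. g w * fst ac) * t + (\<Sum>(w, ac)\<leftarrow>zip ws cs. g w * snd ac)"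
proof (induction ws arbitrary: cs)
  case Nil then show ?case by simp
next
  case (Cons w ws)
  then show ?case by (cases cs) (auto simp: aff_def algebra_simps)
qed

lemma sum_list_Ints: "(\<And>x. x \<in> set xs \<Longrightarrow> f x \<in> \<int>) \<Longrightarrow> (\<Sum>x\<leftarrow>xs. f x) \<in> \<int>"
  by (induction xs) auto

lemma sum_list_abs_le: "(\<And>x. x \<in> set xs \<Longrightarrow> \<bar>f x\<bar> \<le> (B::real)) \<Longrightarrow> \<bar>\<Sum>x\<leftarrow>xs. f x\<bar> \<le> real (length xs) * B"
proof (induction xs)
  case Nil then show ?case by simp
next
  case (Cons x xs)
  have "\<bar>\<Sum>x\<leftarrow>x#xs. f x\<bar> \<le> \<bar>f x\<bar> + \<bar>\<Sum>x\<leftarrow>xs. f x\<bar>" by (simp add: abs_triangle_ineq)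
  also have "\<dots> \<le> B + real (length xs) * B" using Cons by (intro add_mono) auto
  finally show ?case by (simp add: algebra_simps)
qed



lemma row_step:
  fixes row :: "rat list" and bi :: rat and cs :: "(real \<times> real) list" and M :: real
  assumes E0: "E > 0"
    and Lw: "\<forall>w\<in>set row. real_of_int Lw * real_of_rat w \<in> \<int>" "real_of_int Lw * real_of_rat bi \<in> \<int>"
    and bw: "\<forall>w\<in>set row. \<bar>real_of_rat w\<bar> \<le> 2 ^ d" "\<bar>real_of_rat bi\<bar> \<le> 2 ^ d"
    and cs: "\<forall>ac\<in>set cs. aff_ok E M ac" and M1: "M \<ge> 1"
  shows "real_of_int (E * Lw) * (\<Sum>(w, ac)\<leftarrow>zip row cs. real_of_rat w * fst ac) \<in> \<int>"
    "real_of_int (E * Lw) * ((\<Sum>(w, ac)\<leftarrow>zip row cs. real_of_rat w * snd ac) + real_of_rat bi) \<in> \<int>"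
    "\<bar>\<Sum>(w, ac)\<leftarrow>zip row cs. real_of_rat w * fst ac\<bar> \<le> real (length row + 1) * 2 ^ d * M"
    "\<bar>(\<Sum>(w, ac)\<leftarrow>zip row cs. real_of_rat w * snd ac) + real_of_rat bi\<bar> \<le> real (length row + 1) * 2 ^ d * M"
proof -
  have mem: "w \<in> set row \<and> ac \<in> set cs" if "(w, ac) \<in> set (zip row cs)" for w ac
    using that by (auto dest: set_zip_leftD set_zip_rightD)
  have ok: "real_of_int E * fst ac \<in> \<int>" "real_of_int E * snd ac \<in> \<int>" "\<bar>fst ac\<bar> \<le> M" "\<bar>snd ac\<bar> \<le> M"
    if "ac \<in> set cs" for ac using cs that by (auto simp: aff_ok_def)
  have S1: "real_of_int (E * Lw) * (\<Sum>(w, ac)\<leftarrow>zip row cs. real_of_rat w * f ac) \<in> \<int>"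
    if hf: "\<And>ac. ac \<in> set cs \<Longrightarrow> real_of_int E * f ac \<in> \<int>" for f
  proof -
    have "real_of_int (E * Lw) * (\<Sum>(w, ac)\<leftarrow>zip row cs. real_of_rat w * f ac) =
          (\<Sum>x\<leftarrow>zip row cs. (\<lambda>(w, ac). (real_of_int Lw * real_of_rat w) * (real_of_int E * f ac)) x)"
      by (simp add: sum_list_const_mult[symmetric] case_prod_beta algebra_simps)
    also have "\<dots> \<in> \<int>"
    proof (rule sum_list_Ints)
      fix x assume xin: "x \<in> set (zip row cs)"
      obtain w ac where x0: "x = (w, ac)" by (cases x)
      have x: "x = (w, ac)" "w \<in> set row" "ac \<in> set cs" using mem[of w ac] xin x0 by simp_all
      then show "(\<lambda>(w, ac). (real_of_int Lw * real_of_rat w) * (real_of_int E * f ac)) x \<in> \<int>"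
        using Lw hf by (simp add: Ints_mult)
    qed
    finally show ?thesis .
  qed
  show "real_of_int (E * Lw) * (\<Sum>(w, ac)\<leftarrow>zip row cs. real_of_rat w * fst ac) \<in> \<int>"
    using S1[of fst] ok by auto
  have "real_of_int (E * Lw) * real_of_rat bi = real_of_int E * (real_of_int Lw * real_of_rat bi)" by simp
  then have "real_of_int (E * Lw) * real_of_rat bi \<in> \<int>" using Lw by (metis Ints_mult Ints_of_int)
  then show "real_of_int (E * Lw) * ((\<Sum>(w, ac)\<leftarrow>zip row cs. real_of_rat w * snd ac) + real_of_rat bi) \<in> \<int>"
    using S1[of snd] ok by (simp add: distrib_left)
  have lz: "real (length (zip row cs)) \<le> real (length row)" by simp
  have S2: "\<bar>\<Sum>(w, ac)\<leftarrow>zip row cs. real_of_rat w * f ac\<bar> \<le> real (length row) * (2 ^ d * M)"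
    if hf: "\<And>ac. ac \<in> set cs \<Longrightarrow> \<bar>f ac\<bar> \<le> M" for f
  proof -
    have "\<bar>\<Sum>(w, ac)\<leftarrow>zip row cs. real_of_rat w * f ac\<bar> \<le> real (length (zip row cs)) * (2 ^ d * M)"
    proof (rule sum_list_abs_le)
      fix x assume xin: "x \<in> set (zip row cs)"
      obtain w ac where x0: "x = (w, ac)" by (cases x)
      have x: "x = (w, ac)" "w \<in> set row" "ac \<in> set cs" using mem[of w ac] xin x0 by simp_all
      have "\<bar>real_of_rat w * f ac\<bar> = \<bar>real_of_rat w\<bar> * \<bar>f ac\<bar>" by (simp add: abs_mult)
      also have "\<dots> \<le> 2 ^ d * M" using bw x hf by (intro mult_mono) auto
      finally show "\<bar>(case x of (w, ac) \<Rightarrow> real_of_rat w * f ac)\<bar> \<le> 2 ^ d * M" using x by simp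
    qed
    also have "\<dots> \<le> real (length row) * (2 ^ d * M)" using M1 by (intro mult_right_mono) auto
    finally show ?thesis .
  qed
  have pos: "0 \<le> (2::real) ^ d * M" using M1 by simp
  show "\<bar>\<Sum>(w, ac)\<leftarrow>zip row cs. real_of_rat w * fst ac\<bar> \<le> real (length row + 1) * 2 ^ d * M"
    using S2[of fst] ok pos by (simp add: algebra_simps)
  have "\<bar>(\<Sum>(w, ac)\<leftarrow>zip row cs. real_of_rat w * snd ac) + real_of_rat bi\<bar> \<le>
        \<bar>\<Sum>(w, ac)\<leftarrow>zip row cs. real_of_rat w * snd ac\<bar> + \<bar>real_of_rat bi\<bar>" by (rule abs_triangle_ineq)
  also have "\<dots> \<le> real (length row) * (2 ^ d * M) + 2 ^ d * M"
  proof (rule add_mono)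
    show "\<bar>\<Sum>(w, ac)\<leftarrow>zip row cs. real_of_rat w * snd ac\<bar> \<le> real (length row) * (2 ^ d * M)"
      using S2[of snd] ok by blast
    have "(2::real) ^ d * 1 \<le> 2 ^ d * M" using M1 by (intro mult_left_mono) auto
    then show "\<bar>real_of_rat bi\<bar> \<le> 2 ^ d * M" using bw(2) by linarith
  qed
  finally show "\<bar>(\<Sum>(w, ac)\<leftarrow>zip row cs. real_of_rat w * snd ac) + real_of_rat bi\<bar> \<le> real (length row + 1) * 2 ^ d * M"
    by (simp add: algebra_simps)
qed

lemma relu_piece:
  fixes A C u v :: real
  assumes E0: "E > 0" and iA: "real_of_int E * A \<in> \<int>" and iC: "real_of_int E * C \<in> \<int>"
    and bA: "\<bar>real_of_int E * A\<bar> \<le> real_of_int N" and bC: "\<bar>real_of_int E * C\<bar> \<le> real_of_int N"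
    and nq: "\<forall>r\<in>QN N. \<not> (u < r \<and> r < v)"
  shows "\<exists>ac\<in>{(A, C), (0, 0)}. \<forall>t\<in>{u..v}. max 0 (A * t + C) = aff t ac"
proof (cases "\<forall>t\<in>{u..v}. A * t + C \<ge> 0")
  case True then show ?thesis by (auto simp: aff_def)
next
  case False
  then obtain t1 where t1: "t1 \<in> {u..v}" "A * t1 + C < 0" by (auto simp: not_le)
  have "\<forall>t\<in>{u..v}. A * t + C \<le> 0"
  proof (rule ccontr)
    assume "\<not> ?thesis"
    then obtain t2 where t2: "t2 \<in> {u..v}" "A * t2 + C > 0" by (auto simp: not_le)
    have A0: "A \<noteq> 0" using t1 t2 by auto
    define r where "r = - C / A"
    have rr: "A * r + C = 0" using A0 by (simp add: r_def)
    have btw: "u < r \<and> r < v"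
    proof (cases "A > 0")
      case True
      have "A * t1 < A * r" "A * r < A * t2" using t1 t2 rr by linarith+
      then have "t1 < r" "r < t2" using True by simp_all
      then show ?thesis using t1 t2 by auto
    next
      case False
      then have An: "A < 0" using A0 by simp
      have "A * t1 < A * r" "A * r < A * t2" using t1 t2 rr by linarith+
      then have "r < t1" "t2 < r" using An by (simp_all add: mult_less_cancel_left)
      then show ?thesis using t1 t2 by auto
    qed
    obtain a where a: "real_of_int E * A = real_of_int a" using iA by (auto elim: Ints_cases)
    obtain c where c: "real_of_int E * C = real_of_int c" using iC by (auto elim: Ints_cases)
    have a0: "a \<noteq> 0" using a A0 E0 by auto
    have rac: "r = - real_of_int c / real_of_int a"
      using a c E0 A0 by (simp add: r_def) (metis (no_types, opaque_lifting) mult_divide_mult_cancel_left_if of_int_eq_0_iff less_irrefl)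
    have "\<bar>a\<bar> \<le> N" "\<bar>c\<bar> \<le> N" using bA bC a c by linarith+
    have "r \<in> QN N"
    proof (cases "a > 0")
      case True
      then show ?thesis unfolding QN_def using rac \<open>\<bar>a\<bar> \<le> N\<close> \<open>\<bar>c\<bar> \<le> N\<close>
        by (intro CollectI exI[of _ "-c"] exI[of _ a]) auto
    next
      case False
      then have "r = real_of_int c / real_of_int (-a)" using rac by simp
      then show ?thesis unfolding QN_def using False a0 \<open>\<bar>a\<bar> \<le> N\<close> \<open>\<bar>c\<bar> \<le> N\<close>
        by (intro CollectI exI[of _ c] exI[of _ "-a"]) auto
    qed
    then show False using nq btw by auto
  qed
  then show ?thesis by (auto simp: aff_def)
qed



lemma len_concat_mem: "row \<in> set W \<Longrightarrow> length row \<le> length (concat W)"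
  by (induction W) auto

lemma layer_step:
  fixes W :: "rat list list" and b :: "rat list" and M :: real
  assumes E0: "E > 0" and M1: "M \<ge> 1"
    and cs: "\<forall>ac\<in>set cs. aff_ok E M ac"
    and bits: "\<forall>r\<in>set (concat W @ b). rat_bits r \<le> d"
    and NN: "real_of_int (E * pden (concat W @ b)) * (M * 2 ^ ((d + 1) * length (concat W @ b))) \<le> real_of_int N"
    and nq: "\<forall>r\<in>QN N. \<not> (u < r \<and> r < v)"
  shows "\<exists>cs'. (\<forall>ac\<in>set cs'. aff_ok (E * pden (concat W @ b)) (M * 2 ^ ((d + 1) * length (concat W @ b))) ac) \<and>
           (\<forall>t\<in>{u..v}. layer_eval (W, b) (map (aff t) cs) = map (aff t) cs')"
proof -
  define Lw where "Lw = pden (concat W @ b)"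
  define P where "P = length (concat W @ b)"
  define M' where "M' = M * 2 ^ ((d + 1) * P)"
  define E' where "E' = E * Lw"
  have Lw0: "Lw > 0" unfolding Lw_def by (rule pden_pos)
  have E'0: "E' > 0" unfolding E'_def using E0 Lw0 by simp
  define A where "A = (\<lambda>row. \<Sum>(w, ac)\<leftarrow>zip row cs. real_of_rat w * fst ac)"
  define C where "C = (\<lambda>row bi. (\<Sum>(w, ac)\<leftarrow>zip row cs. real_of_rat w * snd ac) + real_of_rat bi)"
  have key: "real_of_int E' * A row \<in> \<int> \<and> real_of_int E' * C row bi \<in> \<int> \<and> \<bar>A row\<bar> \<le> M' \<and> \<bar>C row bi\<bar> \<le> M'"
    if x: "(row, bi) \<in> set (zip W b)" for row bi
  proof -
    have row: "row \<in> set W" and bi: "bi \<in> set b" using x by (auto dest: set_zip_leftD set_zip_rightD)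
    have sub: "\<forall>w\<in>set row. w \<in> set (concat W @ b)" "bi \<in> set (concat W @ b)" using row bi by auto
    have Lw1: "\<forall>w\<in>set row. real_of_int Lw * real_of_rat w \<in> \<int>" "real_of_int Lw * real_of_rat bi \<in> \<int>"
      unfolding Lw_def using sub by (simp_all add: pden_Ints)
    have bd: "\<bar>real_of_rat r\<bar> \<le> 2 ^ d" if "r \<in> set (concat W @ b)" for r
    proof -
      have "(2::real) ^ rat_bits r \<le> 2 ^ d" using bits that by (intro power_increasing) auto
      then show ?thesis using rat_abs_bound[of r] by linarith
    qed
    have bw: "\<forall>w\<in>set row. \<bar>real_of_rat w\<bar> \<le> 2 ^ d" "\<bar>real_of_rat bi\<bar> \<le> 2 ^ d" using sub bd by auto
    note rs = row_step[OF E0 Lw1 bw cs M1]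
    have "length row \<le> length (concat W)" using row by (rule len_concat_mem)
    moreover have "length b \<ge> 1" using bi by (cases b) auto
    ultimately have lP: "length row + 1 \<le> P" unfolding P_def by simp
    have P1: "P \<ge> 1" using lP by simp
    have "real (length row + 1) \<le> real P" using lP by linarith
    also have "\<dots> \<le> 2 ^ P" using less_exp[of P] by (metis less_imp_le of_nat_le_iff of_nat_numeral of_nat_power)
    finally have c1: "real (length row + 1) \<le> 2 ^ P" .
    have c2: "(2::real) ^ d \<le> 2 ^ (d * P)" using P1 by (intro power_increasing) auto
    have "real (length row + 1) * 2 ^ d \<le> 2 ^ P * 2 ^ (d * P)" using c1 c2 by (intro mult_mono) auto
    also have "\<dots> = 2 ^ ((d + 1) * P)" by (simp add: power_add[symmetric] algebra_simps)
    finally have "real (length row + 1) * 2 ^ d * M \<le> 2 ^ ((d + 1) * P) * M" using M1 by (intro mult_right_mono) auto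
    then have c3: "real (length row + 1) * 2 ^ d * M \<le> M'" unfolding M'_def by (simp add: mult.commute)
    show ?thesis using rs c3 unfolding A_def C_def E'_def by auto
  qed
  have M'0: "M' \<ge> 0" unfolding M'_def using M1 by simp
  have EM: "\<bar>real_of_int E' * z\<bar> \<le> real_of_int N" if "\<bar>z\<bar> \<le> M'" for z
  proof -
    have "\<bar>real_of_int E' * z\<bar> = real_of_int E' * \<bar>z\<bar>" using E'0 by (simp add: abs_mult)
    also have "\<dots> \<le> real_of_int E' * M'" using that E'0 by (intro mult_left_mono) auto
    also have "\<dots> \<le> real_of_int N" using NN unfolding E'_def M'_def Lw_def P_def by simp
    finally show ?thesis .
  qed
  have "\<forall>x\<in>set (zip W b). \<exists>ac. aff_ok E' M' ac \<and>
          (\<forall>t\<in>{u..v}. max 0 (A (fst x) * t + C (fst x) (snd x)) = aff t ac)"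
  proof
    fix x assume xin: "x \<in> set (zip W b)"
    obtain row bi where x: "x = (row, bi)" by (cases x)
    have k: "real_of_int E' * A row \<in> \<int>" "real_of_int E' * C row bi \<in> \<int>" "\<bar>A row\<bar> \<le> M'" "\<bar>C row bi\<bar> \<le> M'"
      using key[of row bi] xin x by auto
    obtain ac where ac: "ac \<in> {(A row, C row bi), (0, 0)}" "\<forall>t\<in>{u..v}. max 0 (A row * t + C row bi) = aff t ac"
      using relu_piece[OF E'0 k(1) k(2) EM[OF k(3)] EM[OF k(4)] nq] by blast
    have ok: "aff_ok E' M' ac" using ac(1) k M'0 by (auto simp: aff_ok_def)
    show "\<exists>ac. aff_ok E' M' ac \<and> (\<forall>t\<in>{u..v}. max 0 (A (fst x) * t + C (fst x) (snd x)) = aff t ac)"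
      using ac(2) x ok by (intro exI[of _ ac]) simp
  qed
  then obtain f where f: "\<forall>x\<in>set (zip W b). aff_ok E' M' (f x) \<and>
          (\<forall>t\<in>{u..v}. max 0 (A (fst x) * t + C (fst x) (snd x)) = aff t (f x))"
    by (metis (no_types, lifting) bchoice)
  have "(\<forall>ac\<in>set (map f (zip W b)). aff_ok E' M' ac) \<and>
        (\<forall>t\<in>{u..v}. layer_eval (W, b) (map (aff t) cs) = map (aff t) (map f (zip W b)))"
  proof (intro conjI ballI)
    fix ac assume "ac \<in> set (map f (zip W b))"
    then show "aff_ok E' M' ac" using f by auto
  next
    fix t assume t: "t \<in> {u..v}"
    define F where "F = (\<lambda>(row, bi). max 0 ((\<Sum>(w, v)\<leftarrow>zip (map real_of_rat row) (map (aff t) cs). w * v) + real_of_rat (bi::rat)))"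
    have eq: "F x = aff t (f x)" if xin: "x \<in> set (zip W b)" for x
    proof -
      obtain row bi where x: "x = (row, bi)" by (cases x)
      have "(\<Sum>(w, v)\<leftarrow>zip (map real_of_rat row) (map (aff t) cs). w * v) + real_of_rat bi = A row * t + C row bi"
        unfolding A_def C_def sum_zip_aff by simp
      then show ?thesis unfolding F_def using f xin t x by auto
    qed
    have "map F (zip W b) = map (\<lambda>x. aff t (f x)) (zip W b)" using eq by (rule map_cong[OF refl])
    then show "layer_eval (W, b) (map (aff t) cs) = map (aff t) (map f (zip W b))"
      unfolding layer_eval_def F_def by simp
  qed
  then show ?thesis unfolding E'_def M'_def Lw_def P_def by blast
qed



lemma net_params_snoc: "net_params (L @ [(W, b)]) = net_params L @ (concat W @ b)"
  by (simp add: net_params_def)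

lemma inv:
  fixes L :: relu_net and N :: int
  assumes "\<forall>r\<in>set (net_params L). rat_bits r \<le> d"
    and "2 ^ ((2 * d + 1) * length (net_params L)) \<le> N"
    and nq: "\<forall>r\<in>QN N. \<not> (u < r \<and> r < v)"
  shows "\<exists>cs. (\<forall>ac\<in>set cs. aff_ok (pden (net_params L)) (2 ^ ((d + 1) * length (net_params L))) ac) \<and>
              (\<forall>t\<in>{u..v}. fold layer_eval L [t] = map (aff t) cs)"
  using assms(1,2)
proof (induction L rule: rev_induct)
  case Nil
  have "aff_ok 1 1 (1, 0)" by (simp add: aff_ok_def)
  then show ?case
    by (intro exI[of _ "[(1, 0)]"]) (simp add: net_params_def pden_def aff_def)
next
  case (snoc l L)
  obtain W b where l: "l = (W, b)" by (cases l)
  define E where "E = pden (net_params L)"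
  define n where "n = length (net_params L)"
  define P where "P = length (concat W @ b)"
  have pe: "net_params (L @ [l]) = net_params L @ (concat W @ b)" using l net_params_snoc by simp
  have bitsL: "\<forall>r\<in>set (net_params L). rat_bits r \<le> d" using snoc.prems(1) pe by auto
  have bitsW: "\<forall>r\<in>set (concat W @ b). rat_bits r \<le> d" using snoc.prems(1) pe by auto
  have len: "length (net_params (L @ [l])) = n + P" using pe unfolding n_def P_def by simp
  have "(2::int) ^ ((2 * d + 1) * n) \<le> 2 ^ ((2 * d + 1) * (n + P))" by (intro power_increasing mult_le_mono2) auto
  moreover have "(2::int) ^ ((2 * d + 1) * (n + P)) \<le> N" using snoc.prems(2) len by metis
  ultimately have NL: "(2::int) ^ ((2 * d + 1) * length (net_params L)) \<le> N" unfolding n_def by linarith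
  obtain cs where cs: "\<forall>ac\<in>set cs. aff_ok E (2 ^ ((d + 1) * n)) ac"
      "\<forall>t\<in>{u..v}. fold layer_eval L [t] = map (aff t) cs"
    using snoc.IH[OF bitsL NL] unfolding E_def n_def by blast
  have E0: "E > 0" unfolding E_def by (rule pden_pos)
  have M1: "(2::real) ^ ((d + 1) * n) \<ge> 1" by simp
  have Eb: "E * pden (concat W @ b) = pden (net_params (L @ [l]))" unfolding E_def pe pden_append ..
  have pb: "pden (net_params (L @ [l])) \<le> 2 ^ (d * (n + P))"
    using pden_bound[OF snoc.prems(1)] len by simp
  have "real_of_int (E * pden (concat W @ b)) * (2 ^ ((d + 1) * n) * 2 ^ ((d + 1) * P))
        = real_of_int (pden (net_params (L @ [l]))) * 2 ^ ((d + 1) * (n + P))"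
    unfolding Eb by (simp add: power_add[symmetric] algebra_simps)
  also have "\<dots> \<le> 2 ^ (d * (n + P)) * 2 ^ ((d + 1) * (n + P))"
  proof -
    have "real_of_int (pden (net_params (L @ [l]))) \<le> real_of_int (2 ^ (d * (n + P)))"
      using pb by linarith
    then show ?thesis by (intro mult_right_mono) auto
  qed
  also have "\<dots> = 2 ^ ((2 * d + 1) * (n + P))" by (simp add: power_add[symmetric] algebra_simps)
  also have "\<dots> \<le> real_of_int N"
  proof -
    have "real_of_int ((2::int) ^ ((2 * d + 1) * (n + P))) \<le> real_of_int N"
      using snoc.prems(2) len by simp
    then show ?thesis by simp
  qed
  finally have NN: "real_of_int (E * pden (concat W @ b)) * (2 ^ ((d + 1) * n) * 2 ^ ((d + 1) * length (concat W @ b))) \<le> real_of_int N"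
    unfolding P_def .
  obtain cs' where cs': "\<forall>ac\<in>set cs'. aff_ok (E * pden (concat W @ b)) (2 ^ ((d + 1) * n) * 2 ^ ((d + 1) * length (concat W @ b))) ac"
    "\<forall>t\<in>{u..v}. layer_eval (W, b) (map (aff t) cs) = map (aff t) cs'"
    using layer_step[OF E0 M1 cs(1) bitsW NN nq] by blast
  have "(2::real) ^ ((d + 1) * n) * 2 ^ ((d + 1) * length (concat W @ b)) = 2 ^ ((d + 1) * length (net_params (L @ [l])))"
    using len unfolding P_def by (simp add: power_add[symmetric] algebra_simps)
  then show ?case using cs' cs(2) Eb l by (intro exI[of _ cs']) auto
qed



lemma wf_last:
  assumes "wf_net L"
  shows "\<exists>L' W b. L = L' @ [(W, b)] \<and> length W = 1 \<and> length b = 1"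
proof -
  obtain dims where d: "length dims = length L + 1" "dims ! length L = 1"
    "\<forall>k<length L. length (fst (L ! k)) = dims ! (k + 1) \<and> length (snd (L ! k)) = dims ! (k + 1)"
    and ne: "L \<noteq> []" using assms unfolding wf_net_def by blast
  define k where "k = length L - 1"
  have k: "k < length L" "k + 1 = length L" using ne unfolding k_def by (cases L, auto)+
  have lk: "L ! k = last L" using ne k by (simp add: last_conv_nth k_def)
  obtain W b where Wb: "last L = (W, b)" by (cases "last L")
  have "length W = 1" "length b = 1" using d(3) k d(2) lk Wb by (metis fst_conv snd_conv)+
  moreover have "L = butlast L @ [(W, b)]" using ne Wb by (metis append_butlast_last_id)
  ultimately show ?thesis by blast
qed

lemma layer_eval_len: "length (layer_eval (W, b) h) = min (length W) (length b)"
  by (simp add: layer_eval_def)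

lemma nat_bits_ge1: "nat_bits n \<ge> 1"
  by (subst nat_bits.simps) simp

lemma rat_bits_ge2: "rat_bits r \<ge> 2"
proof (cases "quotient_of r")
  case (Pair a b)
  have "nat_bits (nat \<bar>a\<bar>) \<ge> 1" "nat_bits (nat \<bar>b\<bar>) \<ge> 1" by (rule nat_bits_ge1)+
  then show ?thesis using Pair by (simp add: rat_bits_def int_bits_def)
qed

lemma QN_finite: "finite (QN N)"
proof -
  have "QN N \<subseteq> (\<lambda>(p, q). real_of_int p / real_of_int q) ` ({-N..N} \<times> {1..N})"
    unfolding QN_def by (auto simp: image_iff abs_le_iff intro!: bexI[where x="(p, q)" for p q])
  then show ?thesis by (rule finite_subset) auto
qed

lemma endpoint:
  assumes "rat_bits x \<le> d" "rat_bits y \<le> d"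
  shows "\<exists>p q. real_of_rat (x + y) = real_of_int p / real_of_int q \<and> \<bar>p\<bar> \<le> 2 ^ (2 * d + 1) \<and> 0 < q \<and> q \<le> 2 ^ (2 * d + 1)"
    "\<exists>p q. real_of_rat (x - y) = real_of_int p / real_of_int q \<and> \<bar>p\<bar> \<le> 2 ^ (2 * d + 1) \<and> 0 < q \<and> q \<le> 2 ^ (2 * d + 1)"
proof -
  obtain p1 q1 where 1: "quotient_of x = (p1, q1)" by (cases "quotient_of x")
  obtain p2 q2 where 2: "quotient_of y = (p2, q2)" by (cases "quotient_of y")
  have D: "(2::int) ^ rat_bits x \<le> 2 ^ d" "(2::int) ^ rat_bits y \<le> 2 ^ d" using assms by (auto intro: power_increasing)
  have b1: "\<bar>p1\<bar> \<le> 2 ^ d" "q1 \<le> 2 ^ d" "0 < q1" using rat_bits_parts[OF 1] D(1) by linarith+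
  have b2: "\<bar>p2\<bar> \<le> 2 ^ d" "q2 \<le> 2 ^ d" "0 < q2" using rat_bits_parts[OF 2] D(2) by linarith+
  have x: "real_of_rat x = real_of_int p1 / real_of_int q1" using quotient_of_div[OF 1] by (simp add: of_rat_divide)
  have y: "real_of_rat y = real_of_int p2 / real_of_int q2" using quotient_of_div[OF 2] by (simp add: of_rat_divide)
  have m1: "\<bar>p1 * q2\<bar> \<le> 2 ^ d * 2 ^ d"
  proof -
    have "\<bar>p1\<bar> * \<bar>q2\<bar> \<le> 2 ^ d * 2 ^ d" using b1 b2 by (intro mult_mono) auto
    then show ?thesis by (simp only: abs_mult)
  qed
  have m2: "\<bar>p2 * q1\<bar> \<le> 2 ^ d * 2 ^ d"
  proof -
    have "\<bar>p2\<bar> * \<bar>q1\<bar> \<le> 2 ^ d * 2 ^ d" using b1 b2 by (intro mult_mono) auto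
    then show ?thesis by (simp only: abs_mult)
  qed
  have m3: "q1 * q2 \<le> 2 ^ d * 2 ^ d" using b1 b2 by (intro mult_mono) auto
  have pw: "(2::int) ^ (2 * d + 1) = 2 * (2 ^ d * 2 ^ d)"
  proof -
    have "2 * d + 1 = Suc (d + d)" by simp
    then show ?thesis by (simp only: power_Suc power_add)
  qed
  have q0: "0 < q1 * q2" using b1 b2 by simp
  have nn: "0 \<le> (2::int) ^ d * 2 ^ d" by simp
  have "real_of_rat (x + y) = real_of_int (p1 * q2 + p2 * q1) / real_of_int (q1 * q2)"
    using x y b1 b2 by (simp add: of_rat_add add_divide_eq_iff divide_add_eq_iff)
  moreover have "\<bar>p1 * q2 + p2 * q1\<bar> \<le> 2 ^ (2 * d + 1)" using m1 m2 pw by linarith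
  moreover have "q1 * q2 \<le> 2 ^ (2 * d + 1)" using m3 pw nn by linarith
  ultimately show "\<exists>p q. real_of_rat (x + y) = real_of_int p / real_of_int q \<and> \<bar>p\<bar> \<le> 2 ^ (2 * d + 1) \<and> 0 < q \<and> q \<le> 2 ^ (2 * d + 1)"
    using q0 by blast
  have "real_of_rat (x - y) = real_of_int (p1 * q2 - p2 * q1) / real_of_int (q1 * q2)"
    using x y b1 b2 by (simp add: of_rat_diff diff_divide_eq_iff divide_diff_eq_iff)
  moreover have "\<bar>p1 * q2 - p2 * q1\<bar> \<le> 2 ^ (2 * d + 1)" using m1 m2 pw by linarith
  moreover have "q1 * q2 \<le> 2 ^ (2 * d + 1)" using m3 pw nn by linarith
  ultimately show "\<exists>p q. real_of_rat (x - y) = real_of_int p / real_of_int q \<and> \<bar>p\<bar> \<le> 2 ^ (2 * d + 1) \<and> 0 < q \<and> q \<le> 2 ^ (2 * d + 1)"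
    using q0 by blast
qed

lemma net_aff:
  fixes L :: relu_net and N :: int
  assumes wf: "wf_net L" and "\<forall>r\<in>set (net_params L). rat_bits r \<le> d"
    and "2 ^ ((2 * d + 1) * length (net_params L)) \<le> N"
    and nq: "\<forall>r\<in>QN N. \<not> (u < r \<and> r < v)" and uv: "u \<le> v"
  shows "\<exists>a c. aff_ok (pden (net_params L)) (2 ^ ((d + 1) * length (net_params L))) (a, c) \<and>
              (\<forall>t\<in>{u..v}. net_eval L t = a * t + c)"
proof -
  obtain cs where cs: "\<forall>ac\<in>set cs. aff_ok (pden (net_params L)) (2 ^ ((d + 1) * length (net_params L))) ac"
    "\<forall>t\<in>{u..v}. fold layer_eval L [t] = map (aff t) cs"
    using inv[OF assms(2,3) nq] by blast
  obtain L' W b where Lw: "L = L' @ [(W, b)]" "length W = 1" "length b = 1" using wf_last[OF wf] by blast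
  have "length (fold layer_eval L [u]) = 1" using Lw by (simp add: layer_eval_len)
  then have "length cs = 1" using cs(2) uv by (metis atLeastAtMost_iff length_map order_refl)
  then obtain ac where ac: "cs = [ac]" by (cases cs) auto
  obtain a c where acp: "ac = (a, c)" by (cases ac)
  have "aff_ok (pden (net_params L)) (2 ^ ((d + 1) * length (net_params L))) (a, c)"
    using cs(1) ac acp by simp
  moreover have "\<forall>t\<in>{u..v}. net_eval L t = a * t + c" using cs(2) ac acp by (simp add: net_eval_def aff_def)
  ultimately show ?thesis by blast
qed



theorem lemma11:
  "\<exists>C::real. C > 0 \<and>
     (\<forall>(L::relu_net) (x::rat) (\<epsilon>::rat).
        wf_net L \<longrightarrow> \<epsilon> \<ge> 0 \<longrightarrow>
        (let m = num_params L;
             d = Max (rat_bits ` (set (net_params L) \<union> {x, \<epsilon>}))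
         in \<exists>q::rat.
              real_of_rat q \<in> net_eval L ` {real_of_rat (x - \<epsilon>) .. real_of_rat (x + \<epsilon>)} \<and>
              (\<forall>t\<in>{real_of_rat (x - \<epsilon>) .. real_of_rat (x + \<epsilon>)}. real_of_rat q \<le> net_eval L t) \<and>
              real (rat_bits q) \<le> C * real m * real d))"
proof (intro exI[of _ "30::real"] conjI allI impI)
  show "(30::real) > 0" by simp
  fix L :: relu_net and x \<epsilon> :: rat
  assume wf: "wf_net L" and e0: "\<epsilon> \<ge> 0"
  define m where "m = num_params L"
  define d where "d = Max (rat_bits ` (set (net_params L) \<union> {x, \<epsilon>}))"
  have fin: "finite (rat_bits ` (set (net_params L) \<union> {x, \<epsilon>}))" by simp
  have bits: "\<forall>r\<in>set (net_params L). rat_bits r \<le> d" "rat_bits x \<le> d" "rat_bits \<epsilon> \<le> d"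
  proof -
    have "rat_bits r \<le> d" if "r \<in> set (net_params L) \<union> {x, \<epsilon>}" for r
      unfolding d_def using fin that by (intro Max_ge) auto
    then show "\<forall>r\<in>set (net_params L). rat_bits r \<le> d" "rat_bits x \<le> d" "rat_bits \<epsilon> \<le> d" by auto
  qed
  have d2: "d \<ge> 2" using bits(2) rat_bits_ge2[of x] by linarith
  have lenm: "length (net_params L) = m" by (simp add: m_def num_params_def)
  have m1: "m \<ge> 1"
  proof -
    obtain L' W b where Lw: "L = L' @ [(W, b)]" "length W = 1" "length b = 1" using wf_last[OF wf] by blast
    have "length (net_params L) \<ge> 1" unfolding Lw net_params_snoc using Lw(3) by simp
    then show ?thesis using lenm by simp
  qed
  define K where "K = (2 * d + 1) * m + 2 * d + 1"
  define N :: int where "N = 2 ^ K"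
  have NN: "(2::int) ^ ((2 * d + 1) * length (net_params L)) \<le> N"
    unfolding N_def K_def lenm by (intro power_increasing) auto
  have N2: "(2::int) ^ (2 * d + 1) \<le> N"
    unfolding N_def K_def by (intro power_increasing) auto
  define lo where "lo = real_of_rat (x - \<epsilon>)"
  define hi where "hi = real_of_rat (x + \<epsilon>)"
  have lohi: "lo \<le> hi" using e0 unfolding lo_def hi_def of_rat_less_eq by simp
  define S where "S = (QN N \<inter> {lo..hi}) \<union> {lo, hi}"
  have finS: "finite S" unfolding S_def using QN_finite[of N] by simp
  have neS: "S \<noteq> {}" unfolding S_def by simp
  have Ssub: "S \<subseteq> {lo..hi}" using lohi unfolding S_def by auto
  have Srep: "\<exists>p q. s = real_of_int p / real_of_int q \<and> \<bar>p\<bar> \<le> N \<and> 0 < q \<and> q \<le> N" if "s \<in> S" for s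
  proof -
    have "s \<in> QN N \<or> s = lo \<or> s = hi" using that unfolding S_def by auto
    moreover have ?thesis if "s \<in> QN N" using that unfolding QN_def by blast
    moreover have ?thesis if "s = lo"
      using endpoint(2)[OF bits(2) bits(3)] N2 that unfolding lo_def by (meson order_trans)
    moreover have ?thesis if "s = hi"
      using endpoint(1)[OF bits(2) bits(3)] N2 that unfolding hi_def by (meson order_trans)
    ultimately show ?thesis by blast
  qed
  define g where "g = net_eval L"
  have "Min (g ` S) \<in> g ` S" using finS neS by (intro Min_in) auto
  then obtain t0 where t0S: "t0 \<in> S" and t0m: "g t0 = Min (g ` S)" by auto
  have t0: "\<forall>s\<in>S. g t0 \<le> g s" using t0m finS by simp
  have minp: "\<forall>t\<in>{lo..hi}. g t0 \<le> g t"
  proof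
    fix t assume t: "t \<in> {lo..hi}"
    show "g t0 \<le> g t"
    proof (cases "t \<in> S")
      case True then show ?thesis using t0 by blast
    next
      case False
      define SL where "SL = {s \<in> S. s < t}"
      define SR where "SR = {s \<in> S. t < s}"
      have loS: "lo \<in> S" "hi \<in> S" unfolding S_def by auto
      have "lo \<noteq> t" "hi \<noteq> t" using False loS by auto
      then have loL: "lo \<in> SL" and hiR: "hi \<in> SR" using t loS unfolding SL_def SR_def by auto
      have finL: "finite SL" "finite SR" using finS unfolding SL_def SR_def by auto
      define u where "u = Max SL"
      define v where "v = Min SR"
      have uL: "u \<in> SL" unfolding u_def using finL loL by (intro Max_in) auto
      have vR: "v \<in> SR" unfolding v_def using finL hiR by (intro Min_in) auto
      have ut: "u < t" "u \<in> S" using uL unfolding SL_def by auto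
      have tv: "t < v" "v \<in> S" using vR unfolding SR_def by auto
      have lou: "lo \<le> u" unfolding u_def using finL loL by simp
      have vhi: "v \<le> hi" unfolding v_def using finL hiR by simp
      have nq: "\<forall>r\<in>QN N. \<not> (u < r \<and> r < v)"
      proof (intro ballI notI)
        fix r assume r: "r \<in> QN N" "u < r \<and> r < v"
        then have rS: "r \<in> S" using lou vhi unfolding S_def by auto
        show False
        proof (cases "r < t")
          case True
          then have "r \<in> SL" using rS unfolding SL_def by auto
          then have "r \<le> u" unfolding u_def using finL by simp
          then show False using r by simp
        next
          case False
          then have "t < r" using rS \<open>t \<notin> S\<close> by (cases "r = t") auto
          then have "r \<in> SR" using rS unfolding SR_def by auto
          then have "v \<le> r" unfolding v_def using finL by simp
          then show False using r by simp
        qed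
      qed
      obtain a c where ac: "\<forall>s\<in>{u..v}. g s = a * s + c"
        using net_aff[OF wf bits(1) NN nq] ut tv unfolding g_def by fastforce
      have gt: "g t = a * t + c" "g u = a * u + c" "g v = a * v + c" using ac ut tv by auto
      have "g u \<le> g t \<or> g v \<le> g t"
      proof (cases "a \<ge> 0")
        case True
        then have "a * u \<le> a * t" using ut by (intro mult_left_mono) auto
        then show ?thesis using gt by simp
      next
        case False
        then have "a * v \<le> a * t" using tv by (intro mult_left_mono_neg) auto
        then show ?thesis using gt by simp
      qed
      then show ?thesis using t0 ut(2) tv(2) by force
    qed
  qed
  obtain p q where pq: "t0 = real_of_int p / real_of_int q" "\<bar>p\<bar> \<le> N" "0 < q" "q \<le> N"
    using Srep[OF t0S] by blast
  have nq0: "\<forall>r\<in>QN N. \<not> (t0 < r \<and> r < t0)" by auto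
  define E where "E = pden (net_params L)"
  obtain a c where ac: "aff_ok E (2 ^ ((d + 1) * m)) (a, c)" "\<forall>s\<in>{t0..t0}. g s = a * s + c"
    using net_aff[OF wf bits(1) NN nq0] unfolding g_def E_def lenm by auto
  have gt0: "g t0 = a * t0 + c" using ac(2) by simp
  obtain \<alpha> where al: "real_of_int E * a = real_of_int \<alpha>" using ac(1) by (auto simp: aff_ok_def elim: Ints_cases)
  obtain \<gamma> where ga: "real_of_int E * c = real_of_int \<gamma>" using ac(1) by (auto simp: aff_ok_def elim: Ints_cases)
  have E0: "E > 0" unfolding E_def by (rule pden_pos)
  have Eb: "E \<le> 2 ^ (d * m)" unfolding E_def using pden_bound[OF bits(1)] lenm by simp
  have "d * m \<le> (2 * d + 1) * m" by (intro mult_le_mono1) simp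
  then have "d * m \<le> K" unfolding K_def by simp
  then have "(2::int) ^ (d * m) \<le> 2 ^ K" by (intro power_increasing) auto
  then have EN: "E \<le> N" using Eb unfolding N_def by linarith
  have ex: "d * m + (d + 1) * m = (2 * d + 1) * m" by (simp add: algebra_simps)
  have bnd: "\<bar>real_of_int E * z\<bar> \<le> real_of_int N" if "\<bar>z\<bar> \<le> 2 ^ ((d + 1) * m)" for z
  proof -
    have "\<bar>real_of_int E * z\<bar> = real_of_int E * \<bar>z\<bar>" using E0 by (simp add: abs_mult)
    also have "\<dots> \<le> real_of_int E * 2 ^ ((d + 1) * m)" using that E0 by (intro mult_left_mono) auto
    also have "\<dots> \<le> 2 ^ (d * m) * 2 ^ ((d + 1) * m)"
    proof -
      have "real_of_int E \<le> real_of_int (2 ^ (d * m))" using Eb by linarith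
      then show ?thesis by (intro mult_right_mono) auto
    qed
    also have "\<dots> = 2 ^ ((2 * d + 1) * m)" by (simp only: power_add[symmetric] ex)
    also have "\<dots> \<le> real_of_int N"
    proof -
      have "real_of_int ((2::int) ^ ((2 * d + 1) * m)) \<le> real_of_int N" using NN lenm by simp
      then show ?thesis by simp
    qed
    finally show ?thesis .
  qed
  have alN: "\<bar>\<alpha>\<bar> \<le> N" using bnd[of a] ac(1) al by (simp add: aff_ok_def)
  have gaN: "\<bar>\<gamma>\<bar> \<le> N" using bnd[of c] ac(1) ga by (simp add: aff_ok_def)
  define qv where "qv = rat_of_int (\<alpha> * p + \<gamma> * q) / rat_of_int (E * q)"
  have aE: "a = real_of_int \<alpha> / real_of_int E" "c = real_of_int \<gamma> / real_of_int E"
    using al ga E0 by (simp_all add: eq_divide_eq mult.commute)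
  have "real_of_rat qv = real_of_int (\<alpha> * p + \<gamma> * q) / real_of_int (E * q)"
    unfolding qv_def by (simp add: of_rat_divide of_rat_add of_rat_mult)
  also have "\<dots> = a * t0 + c" unfolding aE pq(1) using E0 pq(3) by (simp add: field_simps)
  finally have qvg: "real_of_rat qv = g t0" using gt0 by simp
  have NNK: "N * N = 2 ^ (2 * K)" unfolding N_def by (simp only: power_add[symmetric] mult_2)
  have num: "\<bar>\<alpha> * p + \<gamma> * q\<bar> < 2 ^ (2 * K + 2)"
  proof -
    have "\<bar>\<alpha> * p + \<gamma> * q\<bar> \<le> \<bar>\<alpha>\<bar> * \<bar>p\<bar> + \<bar>\<gamma>\<bar> * \<bar>q\<bar>"
      by (metis abs_mult abs_triangle_ineq)
    also have "\<dots> \<le> N * N + N * N"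
      using alN gaN pq by (intro add_mono mult_mono) auto
    also have "\<dots> = 2 * 2 ^ (2 * K)" using NNK by simp
    also have "\<dots> < 2 ^ (2 * K + 2)" by simp
    finally show ?thesis .
  qed
  have den: "E * q < 2 ^ (2 * K + 2)"
  proof -
    have "E * q \<le> N * N" using EN pq E0 by (intro mult_mono) auto
    also have "\<dots> < 2 ^ (2 * K + 2)" using NNK by simp
    finally show ?thesis .
  qed
  have rb: "rat_bits qv \<le> (2 * K + 2) + (2 * K + 2)"
    unfolding qv_def using E0 pq(3) num den by (intro rat_bits_frac) auto
  have f1: "4 * m \<le> 2 * (d * m)" using d2 by simp
  have f2: "8 * d \<le> 8 * (d * m)" using m1 by simp
  have f3: "2 * 1 \<le> d * m" using d2 m1 by (intro mult_mono) auto
  have e1: "(2 * K + 2) + (2 * K + 2) = 8 * (d * m) + 4 * m + 8 * d + 8" unfolding K_def by (simp add: algebra_simps)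
  have e2: "30 * m * d = 30 * (d * m)" by simp
  have "(2 * K + 2) + (2 * K + 2) \<le> 30 * m * d" unfolding e1 e2 using f1 f2 f3 by linarith
  then have rb2: "real (rat_bits qv) \<le> 30 * real m * real d" using rb
    by (metis (mono_tags, opaque_lifting) le_trans of_nat_le_iff of_nat_mult of_nat_numeral)
  have "real_of_rat qv \<in> g ` {lo..hi}" using qvg t0S Ssub by auto
  moreover have "\<forall>t\<in>{lo..hi}. real_of_rat qv \<le> g t" using qvg minp by simp
  ultimately show "let m = num_params L; d = Max (rat_bits ` (set (net_params L) \<union> {x, \<epsilon>}))
         in \<exists>q::rat.
              real_of_rat q \<in> net_eval L ` {real_of_rat (x - \<epsilon>) .. real_of_rat (x + \<epsilon>)} \<and>
              (\<forall>t\<in>{real_of_rat (x - \<epsilon>) .. real_of_rat (x + \<epsilon>)}. real_of_rat q \<le> net_eval L t) \<and>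
              real (rat_bits q) \<le> 30 * real m * real d"
    using rb2 unfolding Let_def m_def[symmetric] d_def[symmetric] lo_def[symmetric] hi_def[symmetric] g_def[symmetric]
    by blast
qed

end
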